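(* Let $n,m,p\ge1$, let $A:\mathbb{R}^p\to\mathbb{R}^{n\times n}$, $B:\mathbb{R}^p\to\mathbb{R}^{n\times m}$ be known affine functions, and let $Q\in\mathbb{R}^{n\times n}$, $R\in\mathbb{R}^{m\times m}$ be symmetric positive definite. Consider the system $$x_{k+1}=A(\theta_k)x_k+B(\theta_k)u_k+w_k,\qquad k\in\mathbb{N},$$ with state $x_k\in\mathbb{R}^n$, input $u_k\in\mathbb{R}^m$, disturbance $w_k\in\mathbb{R}^n$ and time-varying parameter $\theta_k\in\mathbb{R}^p$. Assume: (i) there is $\bar W\ge0$ with $\|w_k\|\le\bar W$ for all $k$; (ii) there is a known compact convex set $\Theta\subset\mathbb{R}^p$ with $\theta_k\in\Theta$ for all $k$, such that $(A(\theta),B(\theta))$ is stabilizable for every $\theta\in\Theta$. Let $\mu>0$ and let $\{\hat\theta_k\}\subset\Theta$ be any sequence of parameter estimates, and apply the certainty-equivalent LQR input $u_k=K_{\mathrm{LQR}}(\hat\theta_k)x_k$. Define the nominal prediction $\hat x_{1|k}=A(\hat\theta_k)x_k+B(\hat\theta_k)u_k$ and prediction error $e_{1|k}=x_{k+1}-\hat x_{1|k}-w_k$. Suppose that the estimates satisfy $$\|\hat\theta_{k+1}-\hat\theta_k\|\le\sqrt{\mu}\,\|e_{1|k}+w_k\|\quad\text{for all }k\in\mathbb{N},$$ and that the state is uniformly bounded: $\|x_k\|\le X$ for all $k\in\mathbb{N}$, for some $X>0$. Then there exist constants $\alpha,\beta,\gamma>0$ such that, with $V(x,\theta)=x^\top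 P(\theta)x$, $$V(x_{k+1},\hat\theta_{k+1})-V(x_k,\hat\theta_k)\le-\alpha\|x_k\|^2+\beta\|e_{1|k}\|^2+\gamma\|w_k\|^2\quad\text{for all }k\in\mathbb{N}.$$
   Context: For $\theta\in\Theta$, $P(\theta)$ denotes the unique positive definite solution of the discrete-time algebraic Riccati equation $P = A(\theta)^\top P A(\theta) - A(\theta)^\top P B(\theta)(R+B(\theta)^\top P B(\theta))^{-1}B(\theta)^\top P A(\theta) + Q$, and $K_{\mathrm{LQR}}(\theta) = -(R+B(\theta)^\top P(\theta)B(\theta))^{-1}B(\theta)^\top P(\theta)A(\theta)$ is the corresponding LQR gain. $\|\cdot\|$ is the Euclidean norm on vectors and the spectral norm on matrices; $\mathbb{N}=\{0,1,2,\dots\}$. *)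

theory Defs
  imports "HOL-Analysis.Analysis"
begin

primrec mat_pow :: "real^'n^'n \<Rightarrow> nat \<Rightarrow> real^'n^'n" where
  "mat_pow M 0 = mat 1"
| "mat_pow M (Suc k) = M ** mat_pow M k"

text \<open>Schur stability (all eigenvalues strictly inside the unit disc), expressed through
  the standard characterisation that the powers of the matrix converge to zero.\<close>
definition schur_stable :: "real^'n^'n \<Rightarrow> bool" where
  "schur_stable M \<longleftrightarrow> (\<lambda>k. mat_pow M k) \<longlonglongrightarrow> 0"

definition stabilizable :: "real^'n^'n \<Rightarrow> real^'m^'n \<Rightarrow> bool" where
  "stabilizable A B \<longleftrightarrow> (\<exists>K :: real^'n^'m. schur_stable (A + B ** K))"

definition sym_posdef :: "real^'n^'n \<Rightarrow> bool" where
  "sym_posdef M \<longleftrightarrow> transpose M = M \<and> (\<forall>x. x \<noteq> 0 \<longrightarrow> x \<bullet> (M *v x) > 0)"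

definition dare :: "real^'n^'n \<Rightarrow> real^'m^'n \<Rightarrow> real^'n^'n \<Rightarrow> real^'m^'m \<Rightarrow> real^'n^'n \<Rightarrow> bool" where
  "dare A B Q R P \<longleftrightarrow>
     P = transpose A ** P ** A
         - transpose A ** P ** B ** matrix_inv (R + transpose B ** P ** B) ** transpose B ** P ** A
         + Q"

definition dare_P :: "real^'n^'n \<Rightarrow> real^'m^'n \<Rightarrow> real^'n^'n \<Rightarrow> real^'m^'m \<Rightarrow> real^'n^'n" where
  "dare_P A B Q R = (THE P. sym_posdef P \<and> dare A B Q R P)"

definition K_LQR :: "real^'n^'n \<Rightarrow> real^'m^'n \<Rightarrow> real^'n^'n \<Rightarrow> real^'m^'m \<Rightarrow> real^'n^'m" where
  "K_LQR A B Q R = (let P = dare_P A B Q R in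
      - (matrix_inv (R + transpose B ** P ** B) ** transpose B ** P ** A))"

definition affine_map :: "('a::real_vector \<Rightarrow> 'b::real_vector) \<Rightarrow> bool" where
  "affine_map f \<longleftrightarrow> (\<exists>c L. linear L \<and> (\<forall>x. f x = c + L x))"

end

theory Submission
  imports Defs
begin


definition qf :: "real^'n^'n \<Rightarrow> real^'n \<Rightarrow> real" where
  "qf M x = x \<bullet> (M *v x)"

definition mnorm :: "real^'n^'m \<Rightarrow> real" where
  "mnorm M = (\<Sum>i\<in>UNIV. \<Sum>j\<in>UNIV. \<bar>M $ i $ j\<bar>)"

lemma mnorm_ge0: "mnorm M \<ge> 0"
  unfolding mnorm_def by (intro sum_nonneg) auto

lemma norm_mv_le: "norm (M *v x) \<le> mnorm M * norm x"
proof -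
  have "norm (M *v x) \<le> onorm ((*v) M) * norm x"
    by (rule onorm) simp
  also have "\<dots> \<le> mnorm M * norm x"
    unfolding mnorm_def by (intro mult_right_mono onorm_le_matrix_component_sum) auto
  finally show ?thesis .
qed

declare transpose_matrix_vector[simp del] vector_transpose_matrix[simp del]

lemma inner_mv_transpose: fixes M :: "real^'n^'m" shows "(M *v a) \<bullet> b = a \<bullet> (transpose M *v b)"
proof -
  have "a \<bullet> (transpose M *v b) = (b v* M) \<bullet> a" by (metis inner_commute transpose_matrix_vector)
  also have "\<dots> = b \<bullet> (M *v a)" by (rule dot_lmul_matrix)
  finally show ?thesis by (simp add: inner_commute)
qed

lemma sym_inner: fixes M :: "real^'n^'n" shows "transpose M = M \<Longrightarrow> (M *v a) \<bullet> b = a \<bullet> (M *v b)"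
  by (metis inner_mv_transpose)

lemma qf_add: fixes M :: "real^'n^'n" shows "transpose M = M \<Longrightarrow> qf M (a + b) = qf M a + 2 * (a \<bullet> (M *v b)) + qf M b"
  unfolding qf_def using sym_inner[of M b a] by (simp add: algebra_simps inner_add_left inner_add_right) (metis inner_commute)

lemma qf_diff: fixes M :: "real^'n^'n" shows "transpose M = M \<Longrightarrow> qf M (a - b) = qf M a - 2 * (a \<bullet> (M *v b)) + qf M b"
  unfolding qf_def using sym_inner[of M b a] by (simp add: algebra_simps inner_diff_left inner_diff_right) (metis inner_commute)

lemma qf_scale: "qf M (c *\<^sub>R a) = c^2 * qf M a"
  unfolding qf_def by (simp add: matrix_vector_mult_scaleR power2_eq_square)

lemma qf_plusM: "qf (M1 + M2) x = qf M1 x + qf M2 x"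
  unfolding qf_def by (simp add: matrix_vector_mult_add_rdistrib inner_add_right)

lemma qf_minusM: "qf (M1 - M2) x = qf M1 x - qf M2 x"
  unfolding qf_def by (simp add: matrix_vector_mult_diff_rdistrib inner_diff_right)

lemma qf_zero[simp]: "qf 0 x = 0" "qf M 0 = 0"
  unfolding qf_def by auto

lemma qf_le_mnorm: "qf M x \<le> mnorm M * (norm x)^2"
proof -
  have "qf M x \<le> norm x * norm (M *v x)" unfolding qf_def by (rule norm_cauchy_schwarz)
  also have "\<dots> \<le> norm x * (mnorm M * norm x)" by (intro mult_left_mono norm_mv_le) auto
  finally show ?thesis by (simp add: power2_eq_square algebra_simps)
qed

lemma abs_qf_le_mnorm: "\<bar>qf M x\<bar> \<le> mnorm M * (norm x)^2"
proof -
  have "\<bar>qf M x\<bar> \<le> norm x * norm (M *v x)" unfolding qf_def by (rule Cauchy_Schwarz_ineq2)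
  also have "\<dots> \<le> norm x * (mnorm M * norm x)" by (intro mult_left_mono norm_mv_le) auto
  finally show ?thesis by (simp add: power2_eq_square algebra_simps)
qed

lemma qf_transpose_mult: fixes C :: "real^'n^'m" shows "qf (transpose C ** M ** C) x = qf M (C *v x)"
  unfolding qf_def
  by (simp add: matrix_vector_mul_assoc[symmetric] inner_mv_transpose[symmetric] inner_commute)

lemma entry_qf:
  assumes "transpose M = M"
  shows "M $ i $ j = (qf M (axis i 1 + axis j 1) - qf M (axis i 1) - qf M (axis j 1)) / 2"
proof -
  have e: "axis i 1 \<bullet> (M *v axis j 1) = M $ i $ j" for i j
    by (simp add: inner_axis' matrix_vector_mul_component cart_eq_inner_axis[symmetric])
  show ?thesis using assms by (simp add: qf_add e)
qed

lemma sym_qf_eq: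
  assumes "transpose M1 = M1" "transpose M2 = M2" "\<And>x. qf M1 x = qf M2 x"
  shows "M1 = M2"
proof -
  have "M1 $ i $ j = M2 $ i $ j" for i j
    using entry_qf[OF assms(1), of i j] entry_qf[OF assms(2), of i j] assms(3) by simp
  then show ?thesis by (simp add: vec_eq_iff)
qed

lemma matrix_inv_props:
  fixes S :: "real^'n^'n"
  assumes "invertible S"
  shows "S ** matrix_inv S = mat 1" "matrix_inv S ** S = mat 1"
proof -
  have "\<exists>S'. S ** S' = mat 1 \<and> S' ** S = mat 1" using assms invertible_def by blast
  then have "S ** matrix_inv S = mat 1 \<and> matrix_inv S ** S = mat 1"
    unfolding matrix_inv_def by (rule someI_ex)
  then show "S ** matrix_inv S = mat 1" "matrix_inv S ** S = mat 1" by auto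
qed

lemma matrix_inv_apply:
  fixes S :: "real^'n^'n"
  assumes "invertible S"
  shows "S *v (matrix_inv S *v z) = z"
  by (simp add: matrix_vector_mul_assoc matrix_inv_props[OF assms])

lemma matrix_inv_sym:
  fixes S :: "real^'n^'n"
  assumes "invertible S" "transpose S = S"
  shows "transpose (matrix_inv S) = matrix_inv S"
proof -
  have "transpose (matrix_inv S) ** S = mat 1"
    by (metis assms matrix_inv_props(1) matrix_transpose_mul transpose_mat)
  then have "transpose (matrix_inv S) = transpose (matrix_inv S) ** (S ** matrix_inv S)"
    by (simp add: matrix_inv_props[OF assms(1)])
  also have "\<dots> = matrix_inv S"
    by (metis \<open>transpose (matrix_inv S) ** S = mat 1\<close> matrix_mul_assoc matrix_mul_lid)
  finally show ?thesis .
qed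

lemma pd_invertible:
  fixes S :: "real^'n^'n"
  assumes "\<And>v. v \<noteq> 0 \<Longrightarrow> qf S v > 0"
  shows "invertible S"
proof -
  have "\<forall>x. S *v x = 0 \<longrightarrow> x = 0"
    using assms unfolding qf_def by (metis inner_zero_right less_irrefl)
  then show ?thesis
    using matrix_left_invertible_ker invertible_left_inverse by blast
qed

lemma pd_lower:
  fixes Q :: "real^'n^'n"
  assumes "sym_posdef Q"
  shows "\<exists>q>0. \<forall>x. q * (norm x)^2 \<le> qf Q x"
proof -
  have cont: "continuous_on (sphere 0 1) (qf Q)"
    unfolding qf_def by (intro continuous_intros) 
  have ne: "sphere (0::real^'n) 1 \<noteq> {}"
    by (metis norm_axis_1 mem_sphere_0 empty_iff)
  obtain y where y: "y \<in> sphere 0 1" "\<And>z. z \<in> sphere 0 1 \<Longrightarrow> qf Q y \<le> qf Q z"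
    using continuous_attains_inf[OF compact_sphere ne cont] by blast
  have "y \<noteq> 0" using y(1) by auto
  then have q: "qf Q y > 0" using assms unfolding sym_posdef_def qf_def by auto
  have "qf Q y * (norm x)^2 \<le> qf Q x" for x
  proof (cases "x = 0")
    case True then show ?thesis by simp
  next
    case False
    have "x = norm x *\<^sub>R ((1/norm x) *\<^sub>R x)" using False by simp
    then have "qf Q x = (norm x)^2 * qf Q ((1/norm x) *\<^sub>R x)" by (metis qf_scale)
    moreover have "qf Q y \<le> qf Q ((1/norm x) *\<^sub>R x)" using False by (intro y(2)) simp
    ultimately show ?thesis by (metis mult.commute mult_left_mono zero_le_power2)
  qed
  then show ?thesis using q by blast
qed



definition Sm :: "real^'m^'n \<Rightarrow> real^'m^'m \<Rightarrow> real^'n^'n \<Rightarrow> real^'m^'m" where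
  "Sm B R X = R + transpose B ** X ** B"

definition Ric :: "real^'n^'n \<Rightarrow> real^'m^'n \<Rightarrow> real^'n^'n \<Rightarrow> real^'m^'m \<Rightarrow> real^'n^'n \<Rightarrow> real^'n^'n" where
  "Ric A B Q R X = transpose A ** X ** A
         - transpose A ** X ** B ** matrix_inv (R + transpose B ** X ** B) ** transpose B ** X ** A
         + Q"

definition kst :: "real^'n^'n \<Rightarrow> real^'m^'n \<Rightarrow> real^'m^'m \<Rightarrow> real^'n^'n \<Rightarrow> real^'n \<Rightarrow> real^'m" where
  "kst A B R X x = - (matrix_inv (R + transpose B ** X ** B) *v (transpose B *v (X *v (A *v x))))"

definition fX :: "real^'n^'n \<Rightarrow> real^'m^'n \<Rightarrow> real^'n^'n \<Rightarrow> real^'m^'m \<Rightarrow> real^'n^'n \<Rightarrow> real^'n \<Rightarrow> real^'m \<Rightarrow> real" where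
  "fX A B Q R X x v = qf Q x + qf R v + qf X (A *v x + B *v v)"

lemma transpose_add': "transpose (M1 + M2) = transpose M1 + (transpose M2 :: real^'n^'m)"
  by (simp add: transpose_def vec_eq_iff)
lemma transpose_diff': "transpose (M1 - M2) = transpose M1 - (transpose M2 :: real^'n^'m)"
  by (simp add: transpose_def vec_eq_iff)
lemma transpose_neg': "transpose (- M1) = - (transpose M1 :: real^'n^'m)"
  by (simp add: transpose_def vec_eq_iff)

lemma dare_Ric: "dare A B Q R P \<longleftrightarrow> P = Ric A B Q R P"
  unfolding dare_def Ric_def ..

lemma Sm_sym:
  fixes B :: "real^'m^'n"
  assumes "transpose X = X" "transpose R = R"
  shows "transpose (Sm B R X) = Sm B R X"
  using assms by (simp add: Sm_def matrix_transpose_mul matrix_mul_assoc transpose_add')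

lemma qf_Sm: "qf (Sm B R X) v = qf R v + qf X (B *v v)"
  by (simp add: Sm_def qf_plusM qf_transpose_mult)

lemma completion:
  fixes A :: "real^'n^'n" and B :: "real^'m^'n"
  assumes X: "transpose X = X" and R: "transpose R = R" and S: "invertible (Sm B R X)"
  shows "fX A B Q R X x v = qf (Ric A B Q R X) x + qf (Sm B R X) (v - kst A B R X x)"
proof -
  define S where "S = Sm B R X"
  define Si where "Si = matrix_inv S"
  define h where "h = transpose B *v (X *v (A *v x))"
  define z where "z = Si *v h"
  have Sd: "R + transpose B ** X ** B = S" unfolding S_def Sm_def ..
  have Ssym: "transpose S = S" unfolding S_def using Sm_sym[OF X R] .
  have Sz: "S *v z = h" unfolding z_def Si_def using matrix_inv_apply S S_def by metis
  have k: "kst A B R X x = - z" unfolding kst_def z_def Si_def h_def Sd ..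
  have r1: "qf (transpose A ** X ** A) x = qf X (A *v x)" by (rule qf_transpose_mult)
  have r2: "qf (transpose A ** X ** B ** Si ** transpose B ** X ** A) x = h \<bullet> z"
  proof -
    have "qf (transpose A ** X ** B ** Si ** transpose B ** X ** A) x
        = x \<bullet> (transpose A *v (X *v (B *v z)))"
      unfolding qf_def z_def h_def by (simp add: matrix_vector_mul_assoc[symmetric])
    also have "\<dots> = (A *v x) \<bullet> (X *v (B *v z))" by (simp add: inner_mv_transpose)
    also have "\<dots> = (X *v (A *v x)) \<bullet> (B *v z)" using sym_inner[OF X] by metis
    also have "\<dots> = h \<bullet> z" unfolding h_def by (metis inner_mv_transpose inner_commute)
    finally show ?thesis .
  qed
  have ric: "qf (Ric A B Q R X) x = qf X (A *v x) - h \<bullet> z + qf Q x"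
    unfolding Ric_def Sd Si_def[symmetric] by (simp add: qf_plusM qf_minusM r1 r2)
  have s1: "qf S (v - - z) = qf S v + 2 * (v \<bullet> h) + h \<bullet> z"
    using qf_add[OF Ssym, of v z] Sz by (simp add: qf_def inner_commute)
  have s2: "qf S v = qf R v + qf X (B *v v)" unfolding S_def by (rule qf_Sm)
  have x1: "qf X (A *v x + B *v v) = qf X (A *v x) + 2 * (h \<bullet> v) + qf X (B *v v)"
  proof -
    have "(A *v x) \<bullet> (X *v (B *v v)) = (X *v (A *v x)) \<bullet> (B *v v)" using sym_inner[OF X] by metis
    also have "\<dots> = h \<bullet> v" unfolding h_def by (metis inner_mv_transpose inner_commute)
    finally show ?thesis using qf_add[OF X] by simp
  qed
  show ?thesis unfolding fX_def k S_def[symmetric] s1 s2 ric x1 by (simp add: inner_commute)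
qed

lemma Ric_sym:
  fixes A :: "real^'n^'n" and B :: "real^'m^'n"
  assumes X: "transpose X = X" and R: "transpose R = R" and Q: "transpose Q = Q"
    and S: "invertible (Sm B R X)"
  shows "transpose (Ric A B Q R X) = Ric A B Q R X"
proof -
  have Sd: "R + transpose B ** X ** B = Sm B R X" unfolding Sm_def ..
  have Si: "transpose (matrix_inv (Sm B R X)) = matrix_inv (Sm B R X)"
    using matrix_inv_sym[OF S Sm_sym[OF X R]] .
  show ?thesis unfolding Ric_def Sd
    using X Q Si by (simp add: matrix_transpose_mul matrix_mul_assoc transpose_add' transpose_diff')
qed



definition Kmat :: "real^'n^'n \<Rightarrow> real^'m^'n \<Rightarrow> real^'m^'m \<Rightarrow> real^'n^'n \<Rightarrow> real^'n^'m" where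
  "Kmat A B R X = - (matrix_inv (R + transpose B ** X ** B) ** transpose B ** X ** A)"

lemma neg_mv: "(- M) *v x = - (M *v (x::real^'n))"
  by (simp add: vec_eq_iff matrix_vector_mult_def sum_negf)

lemma Kmat_apply: "Kmat A B R X *v x = kst A B R X x"
  unfolding Kmat_def kst_def neg_mv by (simp add: matrix_vector_mul_assoc[symmetric])

lemma K_LQR_Kmat: "K_LQR A B Q R = Kmat A B R (dare_P A B Q R)"
  unfolding K_LQR_def Kmat_def Let_def ..

lemma qf_pos_R: "sym_posdef R \<Longrightarrow> qf R v \<ge> 0"
  unfolding sym_posdef_def qf_def by (cases "v = 0") (auto intro: less_imp_le)

lemma Sm_inv:
  fixes B :: "real^'m^'n"
  assumes Rpd: "sym_posdef R" and Xp: "\<And>x. qf X x \<ge> 0"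
  shows "invertible (Sm B R X)"
proof (rule pd_invertible)
  fix v :: "real^'m" assume "v \<noteq> 0"
  then have "qf R v > 0" using Rpd unfolding sym_posdef_def qf_def by auto
  then show "qf (Sm B R X) v > 0" using Xp[of "B *v v"] by (simp add: qf_Sm)
qed

lemma Sm_psd:
  assumes Rpd: "sym_posdef R" and Xp: "\<And>x. qf X x \<ge> 0"
  shows "qf (Sm B R X) v \<ge> 0"
  using qf_pos_R[OF Rpd, of v] Xp[of "B *v v"] by (simp add: qf_Sm)

lemma Ric_min:
  fixes A :: "real^'n^'n" and B :: "real^'m^'n"
  assumes Rpd: "sym_posdef R" and Xs: "transpose X = X" and Xp: "\<And>x. qf X x \<ge> 0"
  shows "qf (Ric A B Q R X) x \<le> fX A B Q R X x v"
    and "qf (Ric A B Q R X) x = fX A B Q R X x (kst A B R X x)"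
proof -
  have Rs: "transpose R = R" using Rpd sym_posdef_def by blast
  note c = completion[OF Xs Rs Sm_inv[OF Rpd Xp, of B], where A=A and Q=Q and x=x]
  show "qf (Ric A B Q R X) x \<le> fX A B Q R X x v"
    using c[of v] Sm_psd[OF Rpd Xp] by simp
  show "qf (Ric A B Q R X) x = fX A B Q R X x (kst A B R X x)"
    using c[of "kst A B R X x"] by simp
qed

lemma Ric_ge_Q:
  fixes A :: "real^'n^'n" and B :: "real^'m^'n"
  assumes Rpd: "sym_posdef R" and Xs: "transpose X = X" and Xp: "\<And>x. qf X x \<ge> 0"
  shows "qf (Ric A B Q R X) x \<ge> qf Q x"
  using Ric_min(2)[OF Rpd Xs Xp, where A=A and B=B and Q=Q and x=x] qf_pos_R[OF Rpd] Xp unfolding fX_def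
  by (smt (verit))

lemma Ric_mono:
  fixes A :: "real^'n^'n" and B :: "real^'m^'n"
  assumes Rpd: "sym_posdef R" and Xs: "transpose X = X" and Xp: "\<And>x. qf X x \<ge> 0"
    and Ys: "transpose Y = Y" and Yp: "\<And>x. qf Y x \<ge> 0"
    and XY: "\<And>x. qf X x \<le> qf Y x"
  shows "qf (Ric A B Q R X) x \<le> qf (Ric A B Q R Y) x"
proof -
  have "qf (Ric A B Q R X) x \<le> fX A B Q R X x (kst A B R Y x)"
    by (rule Ric_min(1)[OF Rpd Xs Xp])
  also have "\<dots> \<le> fX A B Q R Y x (kst A B R Y x)"
    unfolding fX_def using XY by simp
  also have "\<dots> = qf (Ric A B Q R Y) x"
    using Ric_min(2)[OF Rpd Ys Yp] by simp
  finally show ?thesis .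
qed

lemma comparison:
  fixes A :: "real^'n^'n" and B :: "real^'m^'n" and K :: "real^'n^'m"
  assumes Rpd: "sym_posdef R" and q: "q > 0" and Qb: "\<And>x. q * (norm x)^2 \<le> qf Q x"
    and Ps: "transpose P = P" and Pp: "\<And>x. qf P x \<ge> 0" and Pd: "P = Ric A B Q R P"
    and Xp: "\<And>x. qf X x \<ge> 0"
    and hX: "\<And>x. qf Q x + qf R (K *v x) + qf X (A *v x + B *v (K *v x)) \<le> qf X x"
  shows "qf P x \<le> qf X x"
proof -
  define L where "L y = A *v y + B *v (K *v y)" for y
  define D where "D y = qf X y - qf P y" for y
  define yk where "yk k = (L ^^ k) x" for k
  have D1: "D (L y) \<le> D y" for y
  proof -
    have "qf P y = qf (Ric A B Q R P) y" using Pd by simp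
    also have "\<dots> \<le> fX A B Q R P y (K *v y)" by (rule Ric_min(1)[OF Rpd Ps Pp])
    finally show ?thesis using hX[of y] unfolding D_def L_def fX_def by simp
  qed
  have Dk: "D (yk k) \<le> D x" for k
  proof (induction k)
    case 0 then show ?case by (simp add: yk_def)
  next
    case (Suc k)
    have "yk (Suc k) = L (yk k)" by (simp add: yk_def)
    then show ?case using D1[of "yk k"] Suc by simp
  qed
  define MX where "MX = mnorm X + 1"
  have MX: "MX > 0" unfolding MX_def using mnorm_ge0[of X] by simp
  define \<rho> where "\<rho> = max 0 (1 - q / MX)"
  have \<rho>: "0 \<le> \<rho>" "\<rho> < 1" unfolding \<rho>_def using q MX by auto
  have qX: "q * (norm y)^2 \<le> qf X y" for y
    using hX[of y] Qb[of y] qf_pos_R[OF Rpd, of "K *v y"] Xp[of "L y"] unfolding L_def by simp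
  have step: "qf X (L y) \<le> \<rho> * qf X y" for y
  proof -
    have a: "qf X (L y) \<le> qf X y - q * (norm y)^2"
      using hX[of y] Qb[of y] qf_pos_R[OF Rpd, of "K *v y"] unfolding L_def by simp
    have "qf X y \<le> MX * (norm y)^2"
    proof -
      have "qf X y \<le> mnorm X * (norm y)^2" by (rule qf_le_mnorm)
      moreover have "0 \<le> (norm y)^2" by simp
      ultimately show ?thesis unfolding MX_def by (simp only: distrib_right mult_1)
    qed
    then have "q / MX * qf X y \<le> q * (norm y)^2"
      using MX q by (simp add: field_simps)
    then have "qf X (L y) \<le> (1 - q / MX) * qf X y" using a by (simp add: algebra_simps)
    also have "\<dots> \<le> \<rho> * qf X y" unfolding \<rho>_def using Xp[of y] by (intro mult_right_mono) auto
    finally show ?thesis .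
  qed
  have Xk: "qf X (yk k) \<le> \<rho>^k * qf X x" for k
  proof (induction k)
    case 0 then show ?case by (simp add: yk_def)
  next
    case (Suc k)
    have "yk (Suc k) = L (yk k)" by (simp add: yk_def)
    then have "qf X (yk (Suc k)) \<le> \<rho> * qf X (yk k)" using step by simp
    also have "\<dots> \<le> \<rho> * (\<rho>^k * qf X x)" using Suc \<rho> by (intro mult_left_mono) auto
    finally show ?case by simp
  qed
  define c where "c = mnorm P / q * qf X x"
  have low: "- (c * \<rho>^k) \<le> D x" for k
  proof -
    have "qf P (yk k) \<le> mnorm P * (norm (yk k))^2" by (rule qf_le_mnorm)
    also have "\<dots> \<le> mnorm P * (qf X (yk k) / q)"
      using qX[of "yk k"] q mnorm_ge0[of P] by (intro mult_left_mono) (auto simp: field_simps)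
    also have "\<dots> \<le> mnorm P * (\<rho>^k * qf X x / q)"
      using Xk[of k] q mnorm_ge0[of P] by (intro mult_left_mono divide_right_mono) auto
    also have "\<dots> = c * \<rho>^k" unfolding c_def by simp
    finally have "qf P (yk k) \<le> c * \<rho>^k" .
    then have "- (c * \<rho>^k) \<le> D (yk k)" unfolding D_def using Xp[of "yk k"] by simp
    then show ?thesis using Dk[of k] by simp
  qed
  have "(\<lambda>k. - (c * \<rho>^k)) \<longlonglongrightarrow> - (c * 0)"
    using \<rho> by (intro tendsto_intros LIMSEQ_power_zero) auto
  then have "- (c * 0) \<le> D x" using low by (intro LIMSEQ_le_const2) auto
  then show ?thesis unfolding D_def by simp
qed

lemma closed_loop_eq:
  fixes A :: "real^'n^'n" and B :: "real^'m^'n"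
  assumes Rpd: "sym_posdef R" and Ps: "transpose P = P" and Pp: "\<And>x. qf P x \<ge> 0"
    and Pd: "P = Ric A B Q R P"
  shows "qf Q x + qf R (Kmat A B R P *v x) + qf P (A *v x + B *v (Kmat A B R P *v x)) = qf P x"
  using Ric_min(2)[OF Rpd Ps Pp, where A=A and B=B and Q=Q and x=x] Pd unfolding Kmat_apply fX_def by simp

lemma posdef_psd: "sym_posdef P \<Longrightarrow> qf P x \<ge> 0"
  by (rule qf_pos_R)

lemma dare_unique:
  fixes A :: "real^'n^'n" and B :: "real^'m^'n"
  assumes Rpd: "sym_posdef R" and Qpd: "sym_posdef Q"
    and P1: "sym_posdef P1" "P1 = Ric A B Q R P1"
    and P2: "sym_posdef P2" "P2 = Ric A B Q R P2"
  shows "P1 = P2"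
proof -
  obtain q where q: "q > 0" "\<And>x. q * (norm x)^2 \<le> qf Q x" using pd_lower[OF Qpd] by blast
  have le: "qf Pa x \<le> qf Pb x"
    if a: "sym_posdef Pa" "Pa = Ric A B Q R Pa" and b: "sym_posdef Pb" "Pb = Ric A B Q R Pb" for Pa Pb x
  proof -
    have as: "transpose Pa = Pa" using a(1) unfolding sym_posdef_def by blast
    have bs: "transpose Pb = Pb" using b(1) unfolding sym_posdef_def by blast
    have ap: "qf Pa y \<ge> 0" for y using a(1) by (rule posdef_psd)
    have bp: "qf Pb y \<ge> 0" for y using b(1) by (rule posdef_psd)
    have h: "qf Q y + qf R (Kmat A B R Pb *v y) + qf Pb (A *v y + B *v (Kmat A B R Pb *v y)) \<le> qf Pb y" for y
      using closed_loop_eq[OF Rpd bs bp b(2), of y] by (rule eq_refl)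
    show ?thesis by (rule comparison[OF Rpd q(1) q(2) as ap a(2) bp h])
  qed
  have s1: "transpose P1 = P1" using P1(1) unfolding sym_posdef_def by blast
  have s2: "transpose P2 = P2" using P2(1) unfolding sym_posdef_def by blast
  have "qf P1 x = qf P2 x" for x
    using le[OF P1 P2, of x] le[OF P2 P1, of x] by (rule antisym)
  then show ?thesis using s1 s2 sym_qf_eq by blast
qed



lemma mat_pow_add: "mat_pow L (a + b) = mat_pow L a ** mat_pow L b"
  by (induction a) (simp_all add: matrix_mul_assoc)

lemma mnorm_tendsto:
  assumes "(f \<longlongrightarrow> M) F"
  shows "((\<lambda>k. mnorm (f k)) \<longlongrightarrow> mnorm M) F"
  unfolding mnorm_def by (intro tendsto_intros assms)

lemma mnorm_zero[simp]: "mnorm 0 = 0"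
  unfolding mnorm_def by simp

lemma funpow_mat_pow: "((\<lambda>y. L *v y) ^^ i) x = mat_pow L i *v x"
  by (induction i) (simp_all add: matrix_vector_mul_assoc)

lemma stable_summable:
  assumes st: "schur_stable L"
  shows "summable (\<lambda>i. (norm (mat_pow L i *v x))^2)"
proof -
  have "(\<lambda>k. mnorm (mat_pow L k)) \<longlonglongrightarrow> 0"
    using mnorm_tendsto[OF st[unfolded schur_stable_def]] by simp
  then have "eventually (\<lambda>k. mnorm (mat_pow L k) < 1/2) sequentially"
    by (rule order_tendstoD) simp
  then obtain N0 where N0: "\<And>k. k \<ge> N0 \<Longrightarrow> mnorm (mat_pow L k) < 1/2"
    unfolding eventually_sequentially by blast
  define N where "N = Suc N0"
  have hN: "mnorm (mat_pow L N) \<le> 1/2" using N0[of N] unfolding N_def by simp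
  have Npos: "N > 0" unfolding N_def by simp
  define a where "a i = norm (mat_pow L i *v x)" for i
  have a0: "a i \<ge> 0" for i unfolding a_def by simp
  have step: "a (N + i) \<le> 1/2 * a i" for i
  proof -
    have "mat_pow L (N + i) *v x = mat_pow L N *v (mat_pow L i *v x)"
      by (simp add: mat_pow_add matrix_vector_mul_assoc)
    then have "a (N + i) \<le> mnorm (mat_pow L N) * a i" unfolding a_def by (simp add: norm_mv_le)
    also have "\<dots> \<le> 1/2 * a i" using hN a0[of i] by (intro mult_right_mono) auto
    finally show ?thesis .
  qed
  have iter: "a (k * N + i) \<le> (1/2)^k * a i" for k i
  proof (induction k)
    case 0 then show ?case by simp
  next
    case (Suc k)
    have "a (Suc k * N + i) = a (N + (k * N + i))" by (simp add: algebra_simps)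
    also have "\<dots> \<le> 1/2 * a (k * N + i)" by (rule step)
    also have "\<dots> \<le> 1/2 * ((1/2)^k * a i)" using Suc by simp
    finally show ?case by simp
  qed
  define c where "c = (\<Sum>j<N. a j)"
  have c: "a j \<le> c" if "j < N" for j
    unfolding c_def using that a0 by (intro member_le_sum) auto
  have c0: "c \<ge> 0" unfolding c_def using a0 by (intro sum_nonneg) auto
  define \<rho> where "\<rho> = (1/2::real) powr (1 / real N)"
  have \<rho>0: "\<rho> > 0" unfolding \<rho>_def by simp
  have \<rho>1: "\<rho> < 1"
  proof -
    have "(1/2::real) powr (1 / real N) < (1/2) powr 0"
      using Npos by (intro powr_less_mono') auto
    then show ?thesis unfolding \<rho>_def by simp
  qed
  have bnd: "a i \<le> 2 * c * \<rho>^i" for i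
  proof -
    define k where "k = i div N"
    have ik: "i = k * N + i mod N" unfolding k_def by simp
    have "a i \<le> (1/2)^k * a (i mod N)" using iter[of k "i mod N"] ik by simp
    also have "\<dots> \<le> (1/2)^k * c" using c[of "i mod N"] Npos by (intro mult_left_mono) auto
    finally have a1: "a i \<le> (1/2)^k * c" .
    have "\<rho>^i = (1/2::real) powr (real i / real N)"
      unfolding \<rho>_def by (simp add: powr_realpow[symmetric] powr_powr)
    have le1: "real i / real N \<le> real k + 1"
    proof -
      have "i < (k + 1) * N" using ik Npos by (metis add.commute add_mult_distrib mod_less_divisor mult_1 nat_add_left_cancel_less)
      then have "real i < (real k + 1) * real N" by (metis of_nat_1 of_nat_add of_nat_less_iff of_nat_mult)
      then show ?thesis using Npos by (simp add: field_simps)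
    qed
    have "(1/2::real) powr (real k + 1) \<le> (1/2) powr (real i / real N)"
      using le1 by (intro powr_mono') auto
    then have "(1/2::real)^k * (1/2) \<le> \<rho>^i"
      using \<open>\<rho>^i = _\<close> by (simp add: powr_add powr_realpow)
    then have "(1/2::real)^k \<le> 2 * \<rho>^i" by simp
    then have "(1/2)^k * c \<le> 2 * \<rho>^i * c" using c0 by (intro mult_right_mono) auto
    then show ?thesis using a1 by (simp add: algebra_simps)
  qed
  have sg: "summable (\<lambda>i. (4 * c^2) * (\<rho>^2)^i)"
    using \<rho>0 \<rho>1 by (intro summable_mult summable_geometric) (simp add: abs_less_iff power_less_one_iff)
  show ?thesis
  proof (rule summable_comparison_test'[OF sg])
    fix i :: nat
    have "(a i)^2 \<le> (2 * c * \<rho>^i)^2" using bnd[of i] a0[of i] by (intro power_mono) auto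
    then show "norm ((norm (mat_pow L i *v x))^2) \<le> 4 * c^2 * (\<rho>^2)^i"
      unfolding a_def by (simp add: power_mult_distrib power_mult[symmetric] mult.commute)
  qed
qed



lemma qf_tendsto:
  assumes "(f \<longlongrightarrow> M) F"
  shows "((\<lambda>k. qf (f k) x) \<longlongrightarrow> qf M x) F"
proof -
  have "((\<lambda>k. f k *v x) \<longlongrightarrow> M *v x) F"
    unfolding matrix_vector_mult_def
    by (intro tendsto_vec_lambda tendsto_sum tendsto_mult tendsto_const tendsto_vec_nth assms)
  then show ?thesis unfolding qf_def by (intro tendsto_intros)
qed

lemma transpose_zero': "transpose (0::real^'n^'m) = 0"
  by (simp add: transpose_def vec_eq_iff)

lemma dare_exists:
  fixes A :: "real^'n^'n" and B :: "real^'m^'n"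
  assumes Rpd: "sym_posdef R" and Qpd: "sym_posdef Q" and stab: "stabilizable A B"
  shows "\<exists>P. sym_posdef P \<and> P = Ric A B Q R P"
proof -
  obtain K0 where st: "schur_stable (A + B ** K0)" using stab unfolding stabilizable_def by blast
  define L0 where "L0 = A + B ** K0"
  have Rs: "transpose R = R" and Qs: "transpose Q = Q" using Rpd Qpd sym_posdef_def by auto
  have Qp: "qf Q x \<ge> 0" for x using Qpd by (rule posdef_psd)
  have Rp: "qf R v \<ge> 0" for v using Rpd by (rule posdef_psd)
  define Ps where "Ps k = (Ric A B Q R ^^ k) 0" for k
  have Ps0: "Ps 0 = 0" and PsS: "Ps (Suc k) = Ric A B Q R (Ps k)" for k unfolding Ps_def by simp_all
  have inv: "transpose (Ps k) = Ps k \<and> (\<forall>x. qf (Ps k) x \<ge> 0)" for k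
  proof (induction k)
    case 0 then show ?case by (simp add: Ps0 transpose_zero')
  next
    case (Suc k)
    then have s: "transpose (Ps k) = Ps k" and p: "\<And>x. qf (Ps k) x \<ge> 0" by auto
    show ?case unfolding PsS
    proof (intro conjI allI)
      show "transpose (Ric A B Q R (Ps k)) = Ric A B Q R (Ps k)"
        by (rule Ric_sym[OF s Rs Qs Sm_inv[OF Rpd p]])
      fix x
      show "qf (Ric A B Q R (Ps k)) x \<ge> 0"
        using Ric_ge_Q[OF Rpd s p, where A=A and B=B and Q=Q and x=x] Qp[of x] by linarith
    qed
  qed
  have Pss: "transpose (Ps k) = Ps k" and Psp: "qf (Ps k) x \<ge> 0" for k x using inv by auto
  have mono: "\<forall>x. qf (Ps k) x \<le> qf (Ps (Suc k)) x" for k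
  proof (induction k)
    case 0 then show ?case using Psp by (simp add: Ps0)
  next
    case (Suc k)
    show ?case
    proof
      fix x
      have "qf (Ric A B Q R (Ps k)) x \<le> qf (Ric A B Q R (Ps (Suc k))) x"
        by (rule Ric_mono[OF Rpd Pss Psp Pss Psp]) (use Suc.IH in blast)
      then show "qf (Ps (Suc k)) x \<le> qf (Ps (Suc (Suc k))) x" by (simp only: PsS)
    qed
  qed
  define g where "g y = qf Q y + qf R (K0 *v y)" for y
  have g0: "g y \<ge> 0" for y unfolding g_def using Qp Rp by (simp add: add_nonneg_nonneg)
  have L0x: "A *v x + B *v (K0 *v x) = L0 *v x" for x
    unfolding L0_def by (simp add: matrix_vector_mult_add_rdistrib matrix_vector_mul_assoc)
  have mpS: "mat_pow L0 (Suc i) *v x = mat_pow L0 i *v (L0 *v x)" for i x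
    using mat_pow_add[of L0 i 1] by (simp add: matrix_vector_mul_assoc)
  have bound: "qf (Ps k) x \<le> (\<Sum>i<k. g (mat_pow L0 i *v x))" for k x
  proof (induction k arbitrary: x)
    case 0 then show ?case by (simp add: Ps0)
  next
    case (Suc k)
    have "qf (Ps (Suc k)) x \<le> fX A B Q R (Ps k) x (K0 *v x)"
      unfolding PsS by (rule Ric_min(1)[OF Rpd Pss Psp])
    also have "\<dots> = g x + qf (Ps k) (L0 *v x)" unfolding fX_def g_def L0x by simp
    also have "\<dots> \<le> g x + (\<Sum>i<k. g (mat_pow L0 i *v (L0 *v x)))" using Suc by simp
    also have "\<dots> = (\<Sum>i<Suc k. g (mat_pow L0 i *v x))"
      unfolding sum.lessThan_Suc_shift mpS by simp
    finally show ?case .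
  qed
  define Cg where "Cg = mnorm Q + mnorm R * (mnorm K0)^2"
  have gb: "g y \<le> Cg * (norm y)^2" for y
  proof -
    have "qf R (K0 *v y) \<le> mnorm R * (norm (K0 *v y))^2" by (rule qf_le_mnorm)
    also have "\<dots> \<le> mnorm R * (mnorm K0 * norm y)^2"
      using norm_mv_le[of K0 y] mnorm_ge0[of R] by (intro mult_left_mono power_mono) auto
    finally show ?thesis using qf_le_mnorm[of Q y] unfolding g_def Cg_def by (simp add: algebra_simps power_mult_distrib)
  qed
  have summ: "summable (\<lambda>i. g (mat_pow L0 i *v x))" for x
  proof (rule summable_comparison_test'[OF summable_mult[OF stable_summable[OF st[folded L0_def]], of Cg]])
    fix i show "norm (g (mat_pow L0 i *v x)) \<le> Cg * (norm (mat_pow L0 i *v x))^2"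
      using gb g0 by simp
  qed
  have conv: "\<exists>l. (\<lambda>k. qf (Ps k) x) \<longlonglongrightarrow> l" for x
  proof -
    have inc: "incseq (\<lambda>k. qf (Ps k) x)" using mono by (simp add: incseq_SucI)
    have "qf (Ps k) x \<le> (\<Sum>i. g (mat_pow L0 i *v x))" for k
    proof -
      have "(\<Sum>i<k. g (mat_pow L0 i *v x)) \<le> (\<Sum>i. g (mat_pow L0 i *v x))"
        by (rule sum_le_suminf[OF summ]) (auto simp: g0)
      then show ?thesis using bound[of k x] by linarith
    qed
    then have "bdd_above (range (\<lambda>k. qf (Ps k) x))" by (meson bdd_aboveI2)
    then show ?thesis using LIMSEQ_incseq_SUP inc by blast
  qed
  define Pl where "Pl = (\<chi> i j. lim (\<lambda>k. Ps k $ i $ j))"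
  have ent: "(\<lambda>k. Ps k $ i $ j) \<longlonglongrightarrow> Pl $ i $ j" for i j
  proof -
    obtain l1 where l1: "(\<lambda>k. qf (Ps k) (axis i 1 + axis j 1)) \<longlonglongrightarrow> l1" using conv by blast
    obtain l2 where l2: "(\<lambda>k. qf (Ps k) (axis i 1)) \<longlonglongrightarrow> l2" using conv by blast
    obtain l3 where l3: "(\<lambda>k. qf (Ps k) (axis j 1)) \<longlonglongrightarrow> l3" using conv by blast
    have "(\<lambda>k. Ps k $ i $ j) \<longlonglongrightarrow> (l1 - l2 - l3) / 2"
      unfolding entry_qf[OF Pss] by (intro tendsto_intros l1 l2 l3) simp
    then have "convergent (\<lambda>k. Ps k $ i $ j)" by (auto simp: convergent_def)
    then show ?thesis unfolding Pl_def by (simp add: convergent_LIMSEQ_iff)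
  qed
  have PsPl: "Ps \<longlonglongrightarrow> Pl"
    by (intro vec_tendstoI) (use ent in auto)
  have qfl: "(\<lambda>k. qf (Ps k) x) \<longlonglongrightarrow> qf Pl x" for x by (rule qf_tendsto[OF PsPl])
  have Pls: "transpose Pl = Pl"
  proof -
    have "Pl $ i $ j = Pl $ j $ i" for i j
    proof -
      have "Ps k $ i $ j = Ps k $ j $ i" for k
        using Pss[of k] by (metis transpose_def vec_lambda_beta)
      then show ?thesis using ent[of i j] ent[of j i] LIMSEQ_unique by simp
    qed
    then show ?thesis by (simp add: transpose_def vec_eq_iff)
  qed
  have Plp: "qf Pl x \<ge> 0" for x
    using qfl[of x] Psp by (intro LIMSEQ_le_const) auto
  have Psle: "qf (Ps k) x \<le> qf Pl x" for k x
    using qfl[of x] mono by (intro incseq_le) (auto simp: incseq_SucI)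
  have up: "qf Pl x \<le> qf (Ric A B Q R Pl) x" for x
  proof -
    have lim1: "(\<lambda>k. qf (Ps (Suc k)) x) \<longlonglongrightarrow> qf Pl x" using qfl[of x] by (rule LIMSEQ_Suc)
    have "qf (Ps (Suc k)) x \<le> qf (Ric A B Q R Pl) x" for k
    proof -
      have "qf (Ps (Suc k)) x \<le> fX A B Q R (Ps k) x (kst A B R Pl x)"
        unfolding PsS by (rule Ric_min(1)[OF Rpd Pss Psp])
      also have "\<dots> \<le> fX A B Q R Pl x (kst A B R Pl x)" unfolding fX_def using Psle by simp
      also have "\<dots> = qf (Ric A B Q R Pl) x" using Ric_min(2)[OF Rpd Pls Plp] by simp
      finally show ?thesis .
    qed
    then show ?thesis using lim1 by (intro LIMSEQ_le_const2) auto
  qed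
  obtain r where r: "r > 0" "\<And>v. r * (norm v)^2 \<le> qf R v" using pd_lower[OF Rpd] by blast
  have down: "qf (Ric A B Q R Pl) x \<le> qf Pl x" for x
  proof -
    define Z where "Z = (norm (A *v x) + mnorm B * sqrt (qf Pl x / r))^2"
    have each: "qf (Ric A B Q R Pl) x \<le> qf Pl x + mnorm (Pl - Ps k) * Z" for k
    proof -
      define v where "v = kst A B R (Ps k) x"
      define z where "z = A *v x + B *v v"
      have fk: "fX A B Q R (Ps k) x v = qf (Ps (Suc k)) x"
        unfolding v_def PsS using Ric_min(2)[OF Rpd Pss Psp] by simp
      have "r * (norm v)^2 \<le> qf (Ps (Suc k)) x"
        using r(2)[of v] Qp[of x] Psp[of k z] fk unfolding fX_def z_def by simp
      also have "\<dots> \<le> qf Pl x" by (rule Psle)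
      finally have "(norm v)^2 \<le> qf Pl x / r" using r(1) by (simp add: field_simps)
      then have nv: "norm v \<le> sqrt (qf Pl x / r)" by (simp add: real_le_rsqrt)
      have "norm z \<le> norm (A *v x) + norm (B *v v)" unfolding z_def by (rule norm_triangle_ineq)
      also have "\<dots> \<le> norm (A *v x) + mnorm B * sqrt (qf Pl x / r)"
      proof -
        have "mnorm B * norm v \<le> mnorm B * sqrt (qf Pl x / r)"
          by (rule mult_left_mono[OF nv mnorm_ge0])
        then show ?thesis using norm_mv_le[of B v] by linarith
      qed
      finally have "(norm z)^2 \<le> Z" unfolding Z_def by (intro power_mono) auto
      then have zb: "mnorm (Pl - Ps k) * (norm z)^2 \<le> mnorm (Pl - Ps k) * Z"
        using mnorm_ge0 by (intro mult_left_mono) auto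
      have "qf (Ric A B Q R Pl) x \<le> fX A B Q R Pl x v" by (rule Ric_min(1)[OF Rpd Pls Plp])
      also have "\<dots> = fX A B Q R (Ps k) x v + qf (Pl - Ps k) z"
        unfolding fX_def z_def qf_minusM by simp
      also have "\<dots> \<le> qf Pl x + mnorm (Pl - Ps k) * (norm z)^2"
        using fk Psle[of "Suc k" x] qf_le_mnorm[of "Pl - Ps k" z] by simp
      finally show ?thesis using zb by simp
    qed
    have "(\<lambda>k. qf Pl x + mnorm (Pl - Ps k) * Z) \<longlonglongrightarrow> qf Pl x + mnorm (Pl - Pl) * Z"
      by (intro tendsto_intros mnorm_tendsto PsPl)
    then have "(\<lambda>k. qf Pl x + mnorm (Pl - Ps k) * Z) \<longlonglongrightarrow> qf Pl x" by simp
    then show ?thesis using each by (intro LIMSEQ_le_const) auto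
  qed
  have Rics: "transpose (Ric A B Q R Pl) = Ric A B Q R Pl"
    by (rule Ric_sym[OF Pls Rs Qs Sm_inv[OF Rpd Plp]])
  have eq: "Pl = Ric A B Q R Pl"
  proof -
    have "qf Pl x = qf (Ric A B Q R Pl) x" for x using up[of x] down[of x] by (rule antisym)
    then show ?thesis using sym_qf_eq[OF Pls Rics] by blast
  qed
  have "sym_posdef Pl"
    unfolding sym_posdef_def
  proof (intro conjI allI impI)
    show "transpose Pl = Pl" by (rule Pls)
    fix x :: "real^'n" assume "x \<noteq> 0"
    then have "qf Q x > 0" using Qpd unfolding sym_posdef_def qf_def by auto
    also have "qf Q x \<le> qf Pl x" using Ric_ge_Q[OF Rpd Pls Plp, where A=A and B=B and Q=Q and x=x] eq[symmetric] by simp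
    finally show "x \<bullet> (Pl *v x) > 0" unfolding qf_def .
  qed
  then show ?thesis using eq by blast
qed

lemma dare_P_props:
  fixes A :: "real^'n^'n" and B :: "real^'m^'n"
  assumes Rpd: "sym_posdef R" and Qpd: "sym_posdef Q" and stab: "stabilizable A B"
  shows "sym_posdef (dare_P A B Q R) \<and> dare_P A B Q R = Ric A B Q R (dare_P A B Q R)"
proof -
  have "\<exists>!P. sym_posdef P \<and> dare A B Q R P"
    unfolding dare_Ric using dare_exists[OF Rpd Qpd stab] dare_unique[OF Rpd Qpd] by blast
  then have "sym_posdef (dare_P A B Q R) \<and> dare A B Q R (dare_P A B Q R)"
    unfolding dare_P_def by (rule theI')
  then show ?thesis unfolding dare_Ric .
qed



lemma scaleM_mv: "(c *\<^sub>R M) *v x = c *\<^sub>R (M *v (x::real^'n))"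
  by (simp add: vec_eq_iff matrix_vector_mult_def sum_distrib_left mult.assoc)

lemma qf_scaleM: "qf (c *\<^sub>R M) x = c * qf M (x::real^'n)"
  unfolding qf_def by (simp add: scaleM_mv)

lemma sq_sum_le: "(a + b)^2 \<le> 2 * a^2 + 2 * (b::real)^2"
proof -
  have "0 \<le> (a - b)^2" by simp
  then show ?thesis unfolding power2_diff power2_sum by linarith
qed

lemma qf_cs:
  fixes P :: "real^'n^'n"
  assumes Ps: "transpose P = P" and Pp: "\<And>x. qf P x \<ge> 0" and eta: "\<eta> > 0"
  shows "qf P (a + b) \<le> (1 + \<eta>) * qf P a + (1 + 1/\<eta>) * qf P b"
proof -
  have "0 \<le> qf P (\<eta> *\<^sub>R a - b)" by (rule Pp)
  also have "\<dots> = \<eta>^2 * qf P a - 2 * \<eta> * (a \<bullet> (P *v b)) + qf P b"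
    unfolding qf_diff[OF Ps] qf_scale by (simp add: matrix_vector_mult_scaleR)
  finally have "2 * \<eta> * (a \<bullet> (P *v b)) \<le> \<eta>^2 * qf P a + qf P b" by simp
  then have "2 * (a \<bullet> (P *v b)) \<le> \<eta> * qf P a + qf P b / \<eta>"
    using eta by (simp add: field_simps power2_eq_square)
  then show ?thesis unfolding qf_add[OF Ps] by (simp add: algebra_simps)
qed

lemma perturb:
  fixes A A' :: "real^'n^'n" and B B' :: "real^'m^'n"
  assumes Rpd: "sym_posdef R"
    and q: "q > 0" and Qb: "\<And>x. q * (norm x)^2 \<le> qf Q x"
    and r: "r > 0" and Rb: "\<And>v. r * (norm v)^2 \<le> qf R v"
    and Ps: "transpose P = P" and Pp: "\<And>x. qf P x \<ge> 0" and Pd: "P = Ric A B Q R P"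
    and M: "M > 0" and PM: "\<And>x. qf P x \<le> M * (norm x)^2"
    and P's: "transpose P' = P'" and P'p: "\<And>x. qf P' x \<ge> 0" and P'd: "P' = Ric A' B' Q R P'"
    and s: "0 < s" "s \<le> 1" and d0: "\<delta> \<ge> 0"
    and dA: "\<And>x. norm ((A' - A) *v x) \<le> \<delta> * norm x"
    and dB: "\<And>v. norm ((B' - B) *v v) \<le> \<delta> * norm v"
    and hd: "\<delta>^2 * (8 * M * (1 + 4 * M / (s * q)) * (1 + M / r)) \<le> s * q"
  shows "qf P' x \<le> (1 + s) * qf P x"
proof -
  define K where "K = Kmat A B R P"
  define X where "X = (1 + s) *\<^sub>R P"
  have Xp: "qf X x \<ge> 0" for x unfolding X_def qf_scaleM using Pp[of x] s by simp
  have Rp: "qf R v \<ge> 0" for v using Rpd by (rule posdef_psd)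
  have hX: "qf Q x + qf R (K *v x) + qf X (A' *v x + B' *v (K *v x)) \<le> qf X x" for x
  proof -
    define y where "y = A *v x + B *v (K *v x)"
    define D where "D = (A' - A) *v x + (B' - B) *v (K *v x)"
    define G where "G = qf Q x + qf R (K *v x)"
    define \<eta> where "\<eta> = s * q / (4 * M)"
    have eta: "\<eta> > 0" unfolding \<eta>_def using s q M by simp
    have cl: "G + qf P y = qf P x"
      unfolding G_def y_def K_def using closed_loop_eq[OF Rpd Ps Pp Pd] by simp
    have Gq: "q * (norm x)^2 \<le> G" unfolding G_def using Qb[of x] Rp[of "K *v x"] by simp
    have Kx: "r * (norm (K *v x))^2 \<le> M * (norm x)^2"
    proof -
      have z: "0 \<le> q * (norm x)^2" using q by simp
      have "r * (norm (K *v x))^2 \<le> qf R (K *v x)" by (rule Rb)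
      also have "\<dots> \<le> G + qf P y" unfolding G_def using Qb[of x] z Pp[of y] by linarith
      also have "\<dots> = qf P x" by (rule cl)
      also have "\<dots> \<le> M * (norm x)^2" by (rule PM)
      finally show ?thesis .
    qed
    then have Kx2: "(norm (K *v x))^2 \<le> M / r * (norm x)^2" using r by (simp add: field_simps)
    have eqy: "A' *v x + B' *v (K *v x) = y + D"
      unfolding y_def D_def by (simp add: matrix_vector_mult_diff_rdistrib algebra_simps)
    have nD: "norm D \<le> \<delta> * norm x + \<delta> * norm (K *v x)"
      unfolding D_def using dA[of x] dB[of "K *v x"] norm_triangle_ineq[of "(A' - A) *v x" "(B' - B) *v (K *v x)"]
      by simp
    have "(norm D)^2 \<le> (\<delta> * norm x + \<delta> * norm (K *v x))^2" using nD by (intro power_mono) auto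
    also have "\<dots> \<le> 2 * \<delta>^2 * (norm x)^2 + 2 * \<delta>^2 * (norm (K *v x))^2"
      using sq_sum_le[of "\<delta> * norm x" "\<delta> * norm (K *v x)"] by (simp add: power_mult_distrib)
    also have "\<dots> \<le> 2 * \<delta>^2 * (norm x)^2 + 2 * \<delta>^2 * (M / r * (norm x)^2)"
      using Kx2 by (intro add_left_mono mult_left_mono) auto
    also have "\<dots> = 2 * \<delta>^2 * (1 + M / r) * (norm x)^2" by (simp add: algebra_simps)
    finally have D2: "(norm D)^2 \<le> 2 * \<delta>^2 * (1 + M / r) * (norm x)^2" .
    have "qf P (y + D) \<le> (1 + \<eta>) * qf P y + (1 + 1/\<eta>) * qf P D" by (rule qf_cs[OF Ps Pp eta])
    also have "\<dots> \<le> (1 + \<eta>) * qf P y + (1 + 1/\<eta>) * (M * (norm D)^2)"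
      using PM[of D] eta by (intro add_left_mono mult_left_mono) auto
    also have "\<dots> \<le> (1 + \<eta>) * qf P y + (1 + 1/\<eta>) * (M * (2 * \<delta>^2 * (1 + M / r) * (norm x)^2))"
      using D2 eta M by (intro add_left_mono mult_left_mono) auto
    finally have c1: "qf P (y + D) \<le> (1 + \<eta>) * qf P y + (1 + 1/\<eta>) * (M * (2 * \<delta>^2 * (1 + M / r) * (norm x)^2))" .
    have one_eta: "1 + 1/\<eta> = 1 + 4 * M / (s * q)" unfolding \<eta>_def using s q M by (simp add: field_simps)
    have E: "(1 + s) * ((1 + 1/\<eta>) * (M * (2 * \<delta>^2 * (1 + M / r) * (norm x)^2))) \<le> s * q / 2 * (norm x)^2"
    proof -
      have "(1 + s) * ((1 + 1/\<eta>) * (M * (2 * \<delta>^2 * (1 + M / r) * (norm x)^2)))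
          = (1 + s) / 4 * (\<delta>^2 * (8 * M * (1 + 4 * M / (s * q)) * (1 + M / r))) * (norm x)^2"
      proof -
        have ring: "(1+s) * (u * (M * (2 * \<delta>^2 * t * n))) = (1+s)/4 * (\<delta>^2 * (8*M*u*t)) * n" for u t n :: real
          by (simp add: field_simps)
        show ?thesis unfolding one_eta by (rule ring)
      qed
      also have "\<dots> \<le> (1 + s) / 4 * (s * q) * (norm x)^2"
        using hd s by (intro mult_right_mono mult_left_mono) auto
      also have "\<dots> \<le> 2 / 4 * (s * q) * (norm x)^2"
        using s q by (intro mult_right_mono mult_left_mono) auto
      finally show ?thesis by simp
    qed
    have T: "(1 + s) * \<eta> * qf P x \<le> s * q / 2 * (norm x)^2"
    proof -
      have "(1 + s) * \<eta> * qf P x \<le> (1 + s) * \<eta> * (M * (norm x)^2)"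
        using PM[of x] s eta by (intro mult_left_mono) auto
      also have "\<dots> = (1 + s) / 4 * (s * q) * (norm x)^2" unfolding \<eta>_def using M by (simp add: field_simps)
      also have "\<dots> \<le> 2 / 4 * (s * q) * (norm x)^2"
        using s q by (intro mult_right_mono mult_left_mono) auto
      finally show ?thesis by simp
    qed
    have sG: "s * q * (norm x)^2 \<le> ((1 + s) * (1 + \<eta>) - 1) * G"
    proof -
      have "s * q * (norm x)^2 \<le> s * G" using Gq s by (simp add: mult_left_mono mult.assoc)
      also have "\<dots> \<le> ((1 + s) * (1 + \<eta>) - 1) * G"
        using Gq q s eta by (intro mult_right_mono) (auto simp: algebra_simps intro: order_trans[OF _ Gq])
      finally show ?thesis .
    qed
    have "G + qf X (y + D) = G + (1 + s) * qf P (y + D)" unfolding X_def qf_scaleM by simp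
    also have "\<dots> \<le> G + (1 + s) * ((1 + \<eta>) * qf P y + (1 + 1/\<eta>) * (M * (2 * \<delta>^2 * (1 + M / r) * (norm x)^2)))"
      using c1 s by (intro add_left_mono mult_left_mono) auto
    also have "\<dots> = G + (1 + s) * (1 + \<eta>) * (qf P x - G) + (1 + s) * ((1 + 1/\<eta>) * (M * (2 * \<delta>^2 * (1 + M / r) * (norm x)^2)))"
      using cl by (simp add: algebra_simps eq_diff_eq[symmetric] cl[symmetric])
    also have "\<dots> = (1 + s) * qf P x + (1 + s) * \<eta> * qf P x - ((1 + s) * (1 + \<eta>) - 1) * G + (1 + s) * ((1 + 1/\<eta>) * (M * (2 * \<delta>^2 * (1 + M / r) * (norm x)^2)))"
      by (simp add: algebra_simps)
    also have "\<dots> \<le> (1 + s) * qf P x" using E T sG by simp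
    finally show ?thesis unfolding G_def eqy X_def qf_scaleM by simp
  qed
  show ?thesis
    using comparison[OF Rpd q Qb P's P'p P'd Xp hX] unfolding X_def qf_scaleM .
qed



lemma mnorm_le_norm: "mnorm (M::real^'n^'m) \<le> real CARD('m) * (real CARD('n) * norm M)"
proof -
  have e: "\<bar>M $ i $ j\<bar> \<le> norm M" for i j
    using component_le_norm_cart[of "M $ i" j] Finite_Cartesian_Product.norm_nth_le[of M i] by linarith
  have "mnorm M \<le> (\<Sum>i\<in>(UNIV::'m set). \<Sum>j\<in>(UNIV::'n set). norm M)"
    unfolding mnorm_def by (intro sum_mono e)
  also have "\<dots> = real CARD('m) * (real CARD('n) * norm M)" by simp
  finally show ?thesis .
qed

lemma affine_lip:
  fixes A :: "real^'p \<Rightarrow> real^'n^'m"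
  assumes "affine_map A"
  shows "\<exists>C\<ge>0. \<forall>t t' x. norm ((A t' - A t) *v x) \<le> C * norm (t' - t) * norm x"
proof -
  obtain c L where L: "linear L" "\<And>x. A x = c + L x" using assms unfolding affine_map_def by blast
  have bl: "bounded_linear L" using L(1) linear_conv_bounded_linear by blast
  obtain CL where CL: "CL > 0" "\<And>h. norm (L h) \<le> norm h * CL"
    using bounded_linear.pos_bounded[OF bl] by blast
  define C where "C = real CARD('m) * (real CARD('n) * CL)"
  have "norm ((A t' - A t) *v x) \<le> C * norm (t' - t) * norm x" for t t' x
  proof -
    have d: "A t' - A t = L (t' - t)" using L by (simp add: linear_diff)
    have "norm ((A t' - A t) *v x) \<le> mnorm (L (t' - t)) * norm x" unfolding d by (rule norm_mv_le)
    also have "\<dots> \<le> real CARD('m) * (real CARD('n) * (norm (t' - t) * CL)) * norm x"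
      using mnorm_le_norm[of "L (t' - t)"] CL(2)[of "t' - t"]
      by (intro mult_right_mono order_trans[OF mnorm_le_norm] mult_left_mono) auto
    also have "\<dots> = C * norm (t' - t) * norm x" unfolding C_def by (simp add: algebra_simps)
    finally show ?thesis .
  qed
  moreover have "C \<ge> 0" unfolding C_def using CL by simp
  ultimately show ?thesis by blast
qed

lemma theta_perturb:
  fixes A :: "real^'p \<Rightarrow> real^'n^'n" and B :: "real^'p \<Rightarrow> real^'m^'n"
  assumes affA: "affine_map A" and affB: "affine_map B"
    and Qpd: "sym_posdef Q" and Rpd: "sym_posdef R"
    and stab: "\<And>th. th \<in> \<Theta> \<Longrightarrow> stabilizable (A th) (B th)"
    and M: "M > 0" and s: "0 < s" "s \<le> 1"
  shows "\<exists>d>0. \<forall>t\<in>\<Theta>. \<forall>t'\<in>\<Theta>. (\<forall>x. qf (dare_P (A t) (B t) Q R) x \<le> M * (norm x)^2) \<longrightarrow>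
           norm (t' - t) < d \<longrightarrow> (\<forall>x. qf (dare_P (A t') (B t') Q R) x \<le> (1 + s) * qf (dare_P (A t) (B t) Q R) x)"
proof -
  obtain q where q: "q > 0" "\<And>x. q * (norm x)^2 \<le> qf Q x" using pd_lower[OF Qpd] by blast
  obtain r where r: "r > 0" "\<And>v. r * (norm v)^2 \<le> qf R v" using pd_lower[OF Rpd] by blast
  obtain CA where CA: "CA \<ge> 0" "\<And>t t' x. norm ((A t' - A t) *v x) \<le> CA * norm (t' - t) * norm x"
    using affine_lip[OF affA] by blast
  obtain CB where CB: "CB \<ge> 0" "\<And>t t' x. norm ((B t' - B t) *v x) \<le> CB * norm (t' - t) * norm x"
    using affine_lip[OF affB] by blast
  define C where "C = CA + CB + 1"
  have C: "C > 0" unfolding C_def using CA CB by simp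
  define \<kappa> where "\<kappa> = 8 * M * (1 + 4 * M / (s * q)) * (1 + M / r)"
  have \<kappa>: "\<kappa> > 0" unfolding \<kappa>_def using M s q r by (simp add: add_pos_pos)
  define \<delta>0 where "\<delta>0 = sqrt (s * q / \<kappa>)"
  have \<delta>0: "\<delta>0 > 0" unfolding \<delta>0_def using s q \<kappa> by simp
  define d where "d = \<delta>0 / C"
  have d: "d > 0" unfolding d_def using \<delta>0 C by simp
  have main: "qf (dare_P (A t') (B t') Q R) x \<le> (1 + s) * qf (dare_P (A t) (B t) Q R) x"
    if t: "t \<in> \<Theta>" and t': "t' \<in> \<Theta>" and PM: "\<forall>x. qf (dare_P (A t) (B t) Q R) x \<le> M * (norm x)^2"
      and dist: "norm (t' - t) < d" for t t' x
  proof -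
    define P where "P = dare_P (A t) (B t) Q R"
    define P' where "P' = dare_P (A t') (B t') Q R"
    have pp: "sym_posdef P \<and> P = Ric (A t) (B t) Q R P" unfolding P_def by (rule dare_P_props[OF Rpd Qpd stab[OF t]])
    have pp': "sym_posdef P' \<and> P' = Ric (A t') (B t') Q R P'" unfolding P'_def by (rule dare_P_props[OF Rpd Qpd stab[OF t']])
    have Ps: "transpose P = P" and Pp: "\<And>x. qf P x \<ge> 0" and Pd: "P = Ric (A t) (B t) Q R P"
      using pp posdef_psd unfolding sym_posdef_def by auto
    have P's: "transpose P' = P'" and P'p: "\<And>x. qf P' x \<ge> 0" and P'd: "P' = Ric (A t') (B t') Q R P'"
      using pp' posdef_psd unfolding sym_posdef_def by auto
    define \<delta> where "\<delta> = C * norm (t' - t)"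
    have \<delta>: "\<delta> \<ge> 0" unfolding \<delta>_def using C by simp
    have \<delta>lt: "\<delta> \<le> \<delta>0" unfolding \<delta>_def using dist C unfolding d_def by (simp add: field_simps)
    have dA: "norm ((A t' - A t) *v y) \<le> \<delta> * norm y" for y
    proof -
      have "norm ((A t' - A t) *v y) \<le> CA * norm (t' - t) * norm y" by (rule CA(2))
      also have "\<dots> \<le> \<delta> * norm y" unfolding \<delta>_def C_def using CB(1)
        by (intro mult_right_mono) (auto simp: algebra_simps)
      finally show ?thesis .
    qed
    have dB: "norm ((B t' - B t) *v v) \<le> \<delta> * norm v" for v
    proof -
      have "norm ((B t' - B t) *v v) \<le> CB * norm (t' - t) * norm v" by (rule CB(2))
      also have "\<dots> \<le> \<delta> * norm v" unfolding \<delta>_def C_def using CA(1)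
        by (intro mult_right_mono) (auto simp: algebra_simps)
      finally show ?thesis .
    qed
    have "\<delta>^2 \<le> \<delta>0^2" using \<delta> \<delta>lt by (intro power_mono) auto
    also have "\<dots> = s * q / \<kappa>" unfolding \<delta>0_def using s q \<kappa> by simp
    finally have "\<delta>^2 * \<kappa> \<le> s * q" using \<kappa> by (simp add: field_simps)
    then have hd: "\<delta>^2 * (8 * M * (1 + 4 * M / (s * q)) * (1 + M / r)) \<le> s * q" unfolding \<kappa>_def .
    show ?thesis unfolding P_def[symmetric] P'_def[symmetric]
      by (rule perturb[OF Rpd q r Ps Pp Pd M _ P's P'p P'd s \<delta> dA dB hd]) (use PM P_def in auto)
  qed
  show ?thesis using d main by blast
qed



lemma bound_uniform:
  fixes A :: "real^'p \<Rightarrow> real^'n^'n" and B :: "real^'p \<Rightarrow> real^'m^'n"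
  assumes affA: "affine_map A" and affB: "affine_map B"
    and Qpd: "sym_posdef Q" and Rpd: "sym_posdef R"
    and stab: "\<And>th. th \<in> \<Theta> \<Longrightarrow> stabilizable (A th) (B th)"
    and cpt: "compact \<Theta>"
  shows "\<exists>Mg>0. \<forall>t\<in>\<Theta>. \<forall>x. qf (dare_P (A t) (B t) Q R) x \<le> Mg * (norm x)^2"
proof -
  define P where "P t = dare_P (A t) (B t) Q R" for t
  define M0 where "M0 t = mnorm (P t) + 1" for t
  have M0: "M0 t > 0" for t unfolding M0_def using mnorm_ge0[of "P t"] by simp
  have PM0: "qf (P t) x \<le> M0 t * (norm x)^2" for t x
  proof -
    have "qf (P t) x \<le> mnorm (P t) * (norm x)^2" by (rule qf_le_mnorm)
    moreover have "0 \<le> (norm x)^2" by simp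
    ultimately show ?thesis unfolding M0_def by (simp only: distrib_right mult_1)
  qed
  have loc: "\<exists>d>0. \<forall>t\<in>\<Theta>. norm (t - t0) < d \<longrightarrow> (\<forall>x. qf (P t) x \<le> 2 * M0 t0 * (norm x)^2)"
    if t0: "t0 \<in> \<Theta>" for t0
  proof -
    have "\<exists>d>0. \<forall>t\<in>\<Theta>. \<forall>t'\<in>\<Theta>. (\<forall>x. qf (P t) x \<le> M0 t0 * (norm x)^2) \<longrightarrow>
           norm (t' - t) < d \<longrightarrow> (\<forall>x. qf (P t') x \<le> (1 + 1) * qf (P t) x)"
      unfolding P_def by (rule theta_perturb[OF affA affB Qpd Rpd stab M0[of t0]]) auto
    then obtain d where d: "d > 0" and H: "\<forall>t\<in>\<Theta>. \<forall>t'\<in>\<Theta>. (\<forall>x. qf (P t) x \<le> M0 t0 * (norm x)^2) \<longrightarrow>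
           norm (t' - t) < d \<longrightarrow> (\<forall>x. qf (P t') x \<le> (1 + 1) * qf (P t) x)" by blast
    have "qf (P t) x \<le> 2 * M0 t0 * (norm x)^2" if "t \<in> \<Theta>" "norm (t - t0) < d" for t x
    proof -
      have "qf (P t) x \<le> (1 + 1) * qf (P t0) x" using H t0 that PM0 by blast
      also have "\<dots> \<le> 2 * (M0 t0 * (norm x)^2)" using PM0[of t0 x] by simp
      finally show ?thesis by simp
    qed
    then show ?thesis using d by blast
  qed
  then obtain d where d: "\<And>t0. t0 \<in> \<Theta> \<Longrightarrow> d t0 > 0 \<and>
      (\<forall>t\<in>\<Theta>. norm (t - t0) < d t0 \<longrightarrow> (\<forall>x. qf (P t) x \<le> 2 * M0 t0 * (norm x)^2))"
    by metis
  have cover: "\<Theta> \<subseteq> (\<Union>t0\<in>\<Theta>. ball t0 (d t0))"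
    using d by force
  obtain F where F: "F \<subseteq> \<Theta>" "finite F" "\<Theta> \<subseteq> (\<Union>t0\<in>F. ball t0 (d t0))"
    using compactE_image[OF cpt _ cover] by blast
  define Mg where "Mg = 2 * (\<Sum>t0\<in>F. M0 t0) + 1"
  have sum0: "(\<Sum>t0\<in>F. M0 t0) \<ge> 0" using M0 by (intro sum_nonneg) (auto intro: less_imp_le)
  have Mg: "Mg > 0" unfolding Mg_def using sum0 by simp
  have "qf (P t) x \<le> Mg * (norm x)^2" if t: "t \<in> \<Theta>" for t x
  proof -
    obtain t0 where t0: "t0 \<in> F" "t \<in> ball t0 (d t0)" using F(3) t by blast
    have "norm (t - t0) < d t0" using t0(2) by (simp add: dist_norm norm_minus_commute)
    then have "qf (P t) x \<le> 2 * M0 t0 * (norm x)^2" using d[of t0] t0(1) F(1) t by blast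
    also have "\<dots> \<le> Mg * (norm x)^2"
    proof (intro mult_right_mono)
      have "M0 t0 \<le> (\<Sum>t0\<in>F. M0 t0)" using F(2) t0(1) M0 by (intro member_le_sum) (auto intro: less_imp_le)
      then show "2 * M0 t0 \<le> Mg" unfolding Mg_def by simp
    qed simp
    finally show ?thesis .
  qed
  then show ?thesis using Mg unfolding P_def by blast
qed



theorem proposition2:
  fixes A :: "real^'p \<Rightarrow> real^'n^'n" and B :: "real^'p \<Rightarrow> real^'m^'n"
    and Q :: "real^'n^'n" and R :: "real^'m^'m"
    and x :: "nat \<Rightarrow> real^'n" and u :: "nat \<Rightarrow> real^'m" and w :: "nat \<Rightarrow> real^'n"
    and \<theta> :: "nat \<Rightarrow> real^'p" and \<theta>h :: "nat \<Rightarrow> real^'p"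
    and e :: "nat \<Rightarrow> real^'n"
    and \<Theta> :: "(real^'p) set" and Wbar \<mu> X :: real
  assumes affA: "affine_map A" and affB: "affine_map B"
    and Qpd: "sym_posdef Q" and Rpd: "sym_posdef R"
    and dyn: "\<And>k. x (Suc k) = A (\<theta> k) *v x k + B (\<theta> k) *v u k + w k"
    and Wbar: "Wbar \<ge> 0" "\<And>k. norm (w k) \<le> Wbar"
    and Theta: "compact \<Theta>" "convex \<Theta>" "\<And>k. \<theta> k \<in> \<Theta>"
    and stab: "\<And>th. th \<in> \<Theta> \<Longrightarrow> stabilizable (A th) (B th)"
    and mu: "\<mu> > 0"
    and est: "\<And>k. \<theta>h k \<in> \<Theta>"
    and input: "\<And>k. u k = K_LQR (A (\<theta>h k)) (B (\<theta>h k)) Q R *v x k"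
    and err: "\<And>k. e k = x (Suc k) - (A (\<theta>h k) *v x k + B (\<theta>h k) *v u k) - w k"
    and upd: "\<And>k. norm (\<theta>h (Suc k) - \<theta>h k) \<le> sqrt \<mu> * norm (e k + w k)"
    and Xpos: "X > 0" and xbd: "\<And>k. norm (x k) \<le> X"
  shows "\<exists>\<alpha> \<beta> \<gamma>. \<alpha> > 0 \<and> \<beta> > 0 \<and> \<gamma> > 0 \<and>
    (\<forall>k. let V = (\<lambda>z th. z \<bullet> (dare_P (A th) (B th) Q R *v z)) in
       V (x (Suc k)) (\<theta>h (Suc k)) - V (x k) (\<theta>h k)
         \<le> - \<alpha> * (norm (x k))\<^sup>2 + \<beta> * (norm (e k))\<^sup>2 + \<gamma> * (norm (w k))\<^sup>2)"
proof -
  define P where "P t = dare_P (A t) (B t) Q R" for t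
  obtain q where q: "q > 0" "\<And>x. q * (norm x)^2 \<le> qf Q x" using pd_lower[OF Qpd] by blast
  obtain Mg where Mg: "Mg > 0" "\<And>t x. t \<in> \<Theta> \<Longrightarrow> qf (P t) x \<le> Mg * (norm x)^2"
    using bound_uniform[OF affA affB Qpd Rpd stab Theta(1)] unfolding P_def by blast
  define s where "s = min 1 (q^2 / (8 * Mg^2))"
  have s: "0 < s" "s \<le> 1" "s \<le> q^2 / (8 * Mg^2)" unfolding s_def using q Mg by auto
  obtain \<delta> where \<delta>: "\<delta> > 0" and H: "\<forall>t\<in>\<Theta>. \<forall>t'\<in>\<Theta>. (\<forall>x. qf (P t) x \<le> Mg * (norm x)^2) \<longrightarrow>
           norm (t' - t) < \<delta> \<longrightarrow> (\<forall>x. qf (P t') x \<le> (1 + s) * qf (P t) x)"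
    using theta_perturb[OF affA affB Qpd Rpd stab Mg(1) s(1) s(2)] unfolding P_def by blast
  define \<eta> where "\<eta> = q / (4 * Mg)"
  have \<eta>: "\<eta> > 0" unfolding \<eta>_def using q Mg by simp
  define C1 where "C1 = (1 + 1/\<eta>) * Mg"
  define C2 where "C2 = 2 * Mg + Mg * X^2 * \<mu> / \<delta>^2"
  define C where "C = C1 + C2"
  have C1: "C1 > 0" unfolding C1_def using \<eta> Mg by (simp add: add_pos_pos)
  have C2: "C2 > 0" unfolding C2_def using Mg \<delta> mu by (simp add: add_pos_nonneg)
  have C: "C > 0" unfolding C_def using C1 C2 by simp
  have key: "qf (P (\<theta>h (Suc k))) (x (Suc k)) - qf (P (\<theta>h k)) (x k)
      \<le> - (q/2) * (norm (x k))^2 + (2*C) * (norm (e k))^2 + (2*C) * (norm (w k))^2" for k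
  proof -
    define t where "t = \<theta>h k"
    define t' where "t' = \<theta>h (Suc k)"
    define xk where "xk = x k"
    define x1 where "x1 = x (Suc k)"
    define d where "d = e k + w k"
    have t: "t \<in> \<Theta>" and t': "t' \<in> \<Theta>" unfolding t_def t'_def using est by auto
    define Pt where "Pt = P t"
    define P' where "P' = P t'"
    have pp: "sym_posdef Pt \<and> Pt = Ric (A t) (B t) Q R Pt"
      unfolding Pt_def P_def by (rule dare_P_props[OF Rpd Qpd stab[OF t]])
    have Ps: "transpose Pt = Pt" and Pp: "\<And>x. qf Pt x \<ge> 0" and Pd: "Pt = Ric (A t) (B t) Q R Pt"
      using pp posdef_psd unfolding sym_posdef_def by auto
    have P'p: "qf P' z \<ge> 0" for z
      unfolding P'_def P_def using dare_P_props[OF Rpd Qpd stab[OF t']] posdef_psd by blast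
    have PtM: "qf Pt z \<le> Mg * (norm z)^2" for z unfolding Pt_def using Mg(2)[OF t] .
    have P'M: "qf P' z \<le> Mg * (norm z)^2" for z unfolding P'_def using Mg(2)[OF t'] .
    define K where "K = Kmat (A t) (B t) R Pt"
    have uk: "u k = K *v xk" unfolding K_def xk_def Pt_def P_def t_def using input[of k] K_LQR_Kmat by metis
    define y where "y = A t *v xk + B t *v (K *v xk)"
    have x1: "x1 = y + d" unfolding x1_def y_def d_def
      using err[of k] uk unfolding t_def xk_def by (simp add: algebra_simps)
    define G where "G = qf Q xk + qf R (K *v xk)"
    have cl: "G + qf Pt y = qf Pt xk"
      unfolding G_def y_def K_def using closed_loop_eq[OF Rpd Ps Pp Pd] by simp
    have Rp: "qf R v \<ge> 0" for v using Rpd by (rule posdef_psd)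
    have Gq: "q * (norm xk)^2 \<le> G" unfolding G_def using q(2)[of xk] Rp[of "K *v xk"] by simp
    have yb: "(norm y)^2 \<le> Mg / q * (norm xk)^2"
    proof -
      have "q * (norm y)^2 \<le> qf Q y" by (rule q(2))
      also have "\<dots> \<le> qf Pt y" using Ric_ge_Q[OF Rpd Ps Pp, where A="A t" and B="B t" and Q=Q and x=y] Pd by simp
      also have "\<dots> \<le> qf Pt xk" using cl Gq q(1) by (smt (verit) zero_le_mult_iff zero_le_power2)
      also have "\<dots> \<le> Mg * (norm xk)^2" by (rule PtM)
      finally show ?thesis using q(1) by (simp add: field_simps)
    qed
    have x1b: "(norm x1)^2 \<le> 2 * (norm y)^2 + 2 * (norm d)^2"
    proof -
      have "norm x1 \<le> norm y + norm d" unfolding x1 by (rule norm_triangle_ineq)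
      then have "(norm x1)^2 \<le> (norm y + norm d)^2" by (intro power_mono) auto
      also have "\<dots> \<le> 2 * (norm y)^2 + 2 * (norm d)^2" by (rule sq_sum_le)
      finally show ?thesis .
    qed
    have T1: "qf Pt x1 - qf Pt xk \<le> - (3/4 * q) * (norm xk)^2 + C1 * (norm d)^2"
    proof -
      have "qf Pt x1 \<le> (1 + \<eta>) * qf Pt y + (1 + 1/\<eta>) * qf Pt d"
        unfolding x1 by (rule qf_cs[OF Ps Pp \<eta>])
      also have "\<dots> \<le> (1 + \<eta>) * qf Pt y + C1 * (norm d)^2"
      proof -
        have "0 \<le> 1 + 1/\<eta>" using \<eta> by simp
        then have "(1 + 1/\<eta>) * qf Pt d \<le> (1 + 1/\<eta>) * (Mg * (norm d)^2)"
          by (rule mult_left_mono[OF PtM])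
        then show ?thesis unfolding C1_def by (simp add: mult.assoc)
      qed
      finally have a0: "qf Pt x1 \<le> (1 + \<eta>) * qf Pt y + C1 * (norm d)^2" .
      have qy: "qf Pt y = qf Pt xk - G" using cl by linarith
      from a0 have a: "qf Pt x1 \<le> (1 + \<eta>) * (qf Pt xk - G) + C1 * (norm d)^2" unfolding qy .
      have b: "\<eta> * qf Pt xk \<le> q / 4 * (norm xk)^2"
      proof -
        have "\<eta> * qf Pt xk \<le> \<eta> * (Mg * (norm xk)^2)" using PtM[of xk] \<eta> by (intro mult_left_mono) auto
        also have "\<dots> = q / 4 * (norm xk)^2" unfolding \<eta>_def using Mg(1) by simp
        finally show ?thesis .
      qed
      have c: "G \<le> (1 + \<eta>) * G" using \<eta> Gq q(1)
        by (simp add: algebra_simps) (smt (verit) mult_nonneg_nonneg zero_le_power2)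
      show ?thesis using a b c Gq by (simp add: algebra_simps)
    qed
    have T2: "qf P' x1 - qf Pt x1 \<le> q / 4 * (norm xk)^2 + C2 * (norm d)^2"
    proof (cases "norm (t' - t) < \<delta>")
      case True
      have "qf P' x1 \<le> (1 + s) * qf Pt x1"
        using H t t' True PtM unfolding Pt_def P'_def by blast
      then have "qf P' x1 - qf Pt x1 \<le> s * qf Pt x1" by (simp add: algebra_simps)
      also have "\<dots> \<le> s * (Mg * (norm x1)^2)" using PtM[of x1] s by (intro mult_left_mono) auto
      also have "\<dots> \<le> s * (Mg * (2 * (Mg / q * (norm xk)^2) + 2 * (norm d)^2))"
        using x1b yb s Mg(1) by (intro mult_left_mono) auto
      also have "\<dots> = (2 * s * Mg^2 / q) * (norm xk)^2 + (2 * s * Mg) * (norm d)^2"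
        by (simp add: algebra_simps power2_eq_square)
      also have "\<dots> \<le> q / 4 * (norm xk)^2 + C2 * (norm d)^2"
      proof (intro add_mono mult_right_mono)
        have "2 * s * Mg^2 \<le> 2 * (q^2 / (8 * Mg^2)) * Mg^2" using s(3) Mg(1) by (intro mult_right_mono) auto
        also have "\<dots> = q^2 / 4" using Mg(1) by (simp add: field_simps)
        finally show "2 * s * Mg^2 / q \<le> q / 4" using q(1) by (simp add: field_simps power2_eq_square)
        have "2 * s * Mg \<le> 2 * Mg" using s Mg(1) by simp
        also have "\<dots> \<le> C2" unfolding C2_def using Mg(1) mu \<delta> by simp
        finally show "2 * s * Mg \<le> C2" .
      qed auto
      finally show ?thesis .
    next
      case False
      have "\<delta> \<le> sqrt \<mu> * norm d" using False upd[of k] unfolding t_def t'_def d_def by simp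
      then have "\<delta>^2 \<le> (sqrt \<mu> * norm d)^2" using \<delta> by (intro power_mono) auto
      then have dd: "\<delta>^2 \<le> \<mu> * (norm d)^2" using mu by (simp add: power_mult_distrib)
      have "qf P' x1 \<le> Mg * (norm x1)^2" by (rule P'M)
      also have "\<dots> \<le> Mg * X^2" using xbd[of "Suc k"] Mg(1) unfolding x1_def
        by (intro mult_left_mono power_mono) auto
      also have "\<dots> = (Mg * X^2 * \<mu> / \<delta>^2) * (\<delta>^2 / \<mu>)" using \<delta> mu by simp
      also have "\<dots> \<le> (Mg * X^2 * \<mu> / \<delta>^2) * (norm d)^2"
        using dd mu Mg(1) \<delta> by (intro mult_left_mono) (auto simp: field_simps)
      also have "\<dots> \<le> C2 * (norm d)^2" unfolding C2_def using Mg(1) by (intro mult_right_mono) auto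
      finally have "qf P' x1 \<le> C2 * (norm d)^2" .
      moreover have "0 \<le> q / 4 * (norm xk)^2" using q(1) by simp
      ultimately show ?thesis using Pp[of x1] by linarith
    qed
    have dsq: "(norm d)^2 \<le> 2 * (norm (e k))^2 + 2 * (norm (w k))^2"
    proof -
      have "norm d \<le> norm (e k) + norm (w k)" unfolding d_def by (rule norm_triangle_ineq)
      then have "(norm d)^2 \<le> (norm (e k) + norm (w k))^2" by (intro power_mono) auto
      also have "\<dots> \<le> 2 * (norm (e k))^2 + 2 * (norm (w k))^2" by (rule sq_sum_le)
      finally show ?thesis .
    qed
    have "qf P' x1 - qf Pt xk \<le> - (q/2) * (norm xk)^2 + C * (norm d)^2"
      using T1 T2 unfolding C_def by (simp add: algebra_simps)
    also have "\<dots> \<le> - (q/2) * (norm xk)^2 + C * (2 * (norm (e k))^2 + 2 * (norm (w k))^2)"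
      using dsq C by (intro add_left_mono mult_left_mono) auto
    finally show ?thesis unfolding P'_def Pt_def t'_def t_def x1_def xk_def by (simp add: algebra_simps)
  qed
  show ?thesis
  proof (intro exI conjI allI)
    show "q / 2 > 0" using q(1) by simp
    show "2 * C > 0" using C by simp
    show "2 * C > 0" using C by simp
    fix k
    show "let V = (\<lambda>z th. z \<bullet> (dare_P (A th) (B th) Q R *v z)) in
       V (x (Suc k)) (\<theta>h (Suc k)) - V (x k) (\<theta>h k)
         \<le> - (q / 2) * (norm (x k))\<^sup>2 + (2 * C) * (norm (e k))\<^sup>2 + (2 * C) * (norm (w k))\<^sup>2"
      using key[of k] unfolding Let_def qf_def P_def .
  qed
qed

end
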